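(* Let $\mathcal{H}_O\simeq\mathbb{C}^{d_O}$ and $\mathcal{H}_R\simeq\mathbb{C}^{d_R}$. Let $H_R=\sum_{m=1}^{d_R}\lambda_m^{\uparrow}|\xi_m\rangle\langle\xi_m|$ with $\lambda_1^\uparrow\leqslant\dots\leqslant\lambda_{d_R}^\uparrow$ and $\{|\xi_m\rangle\}$ an orthonormal basis of $\mathcal{H}_R$; let $\beta\in(0,\infty)$ and $\rho_R(\beta)=e^{-\beta H_R}/\mathrm{tr}[e^{-\beta H_R}]=\sum_m r_m^{\downarrow}|\xi_m\rangle\langle\xi_m|$. Let $\rho_O=\sum_{l=1}^{d_O}o_l^{\downarrow}|\varphi_l\rangle\langle\varphi_l|$ be a density operator on $\mathcal{H}_O$ with $o_1^\downarrow\geqslant\dots\geqslant o_{d_O}^\downarrow$ and $\{|\varphi_l\rangle\}$ an orthonormal basis. Write $\rho=\rho_O\otimes\rho_R(\beta)=\sum_{n=1}^{d_Od_R}p_n^{\downarrow}|\psi_n\rangle\langle\psi_n|$, where $(p_n^\downarrow)_n$ is the non-increasing rearrangement of $(o_l^\downarrow r_m^\downarrow)_{l,m}$ and $(|\psi_n\rangle)_n$ the correspondingly rearranged family $(|\varphi_l\rangle\otimes|\xi_m\rangle)_{l,m}$. For a unitary $U$ on $\mathcal{H}_O\otimes\mathcal{H}_R$ let $\rho_O'=\mathrm{tr}_R[U\rho U^\dagger]$ and $p(\varphi_1|\rho_O')=\langle\varphi_1|\rho_O'|\varphi_1\rangle$. Then $$\max_{U}\, p(\varphi_1|\rho_O')=p_{\varphi_1}^{\max}:=\sum_{m=1}^{d_R}p_m^{\downarrow},$$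 and this maximum is attained by every unitary $U$ for which there is an orthonormal basis $\{|\xi_m'\rangle\}_{m=1}^{d_R}$ of $\mathcal{H}_R$ with $U|\psi_m\rangle=|\varphi_1\rangle\otimes|\xi_m'\rangle$ for all $m\in\{1,\dots,d_R\}$.
   Context: The maximum is over all unitary operators on $\mathcal{H}_O\otimes\mathcal{H}_R$; $\mathrm{tr}_R$ denotes the partial trace over $\mathcal{H}_R$. *)

theory Defs
  imports "Jordan_Normal_Form.Schur_Decomposition"
begin

text \<open>The composite space C^dO (x) C^dR is identified with C^(dO*dR) via (l,m) |-> l*dR+m
  (0-based indices).  Inner product <w|v> is written  v \<bullet>c w.\<close>

definition onb :: "nat \<Rightarrow> (nat \<Rightarrow> complex vec) \<Rightarrow> bool" where
  "onb n vs \<longleftrightarrow> (\<forall>i<n. vs i \<in> carrier_vec n) \<and>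
     (\<forall>i<n. \<forall>j<n. vs i \<bullet>c vs j = (if i = j then 1 else 0))"

definition spec_mat :: "nat \<Rightarrow> (nat \<Rightarrow> real) \<Rightarrow> (nat \<Rightarrow> complex vec) \<Rightarrow> complex mat" where
  "spec_mat n c vs = mat n n (\<lambda>(i,j). \<Sum>m<n. complex_of_real (c m) * (vs m $ i) * cnj (vs m $ j))"

text \<open>Gibbs state e^{-beta H}/tr e^{-beta H} of H = spec_mat n lam vs (functional calculus
  via the spectral decomposition).\<close>
definition gibbs_weights :: "nat \<Rightarrow> real \<Rightarrow> (nat \<Rightarrow> real) \<Rightarrow> nat \<Rightarrow> real" where
  "gibbs_weights n \<beta> lam = (\<lambda>m. exp (- \<beta> * lam m) / (\<Sum>k<n. exp (- \<beta> * lam k)))"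

definition gibbs_state :: "nat \<Rightarrow> real \<Rightarrow> (nat \<Rightarrow> real) \<Rightarrow> (nat \<Rightarrow> complex vec) \<Rightarrow> complex mat" where
  "gibbs_state n \<beta> lam vs = spec_mat n (gibbs_weights n \<beta> lam) vs"

definition tensor_vec :: "complex vec \<Rightarrow> complex vec \<Rightarrow> complex vec" where
  "tensor_vec v w = vec (dim_vec v * dim_vec w)
     (\<lambda>k. v $ (k div dim_vec w) * w $ (k mod dim_vec w))"

definition tensor_mat :: "complex mat \<Rightarrow> complex mat \<Rightarrow> complex mat" where
  "tensor_mat A B = mat (dim_row A * dim_row B) (dim_col A * dim_col B)
     (\<lambda>(i,j). A $$ (i div dim_row B, j div dim_col B) * B $$ (i mod dim_row B, j mod dim_col B))"

definition partial_trace_R :: "nat \<Rightarrow> nat \<Rightarrow> complex mat \<Rightarrow> complex mat" where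
  "partial_trace_R dO dR A = mat dO dO (\<lambda>(i,j). \<Sum>m<dR. A $$ (i * dR + m, j * dR + m))"

definition unitary_mat :: "nat \<Rightarrow> complex mat \<Rightarrow> bool" where
  "unitary_mat n U \<longleftrightarrow> U \<in> carrier_mat n n \<and> U * mat_adjoint U = 1\<^sub>m n \<and> mat_adjoint U * U = 1\<^sub>m n"

text \<open>Probability <phi|A|phi> (real part; the value is real for Hermitian A).\<close>
definition prob_in :: "complex vec \<Rightarrow> complex mat \<Rightarrow> real" where
  "prob_in \<phi> A = Re ((A *\<^sub>v \<phi>) \<bullet>c \<phi>)"

end

theory Submission
  imports Defs
begin


lemma sum_prod_nat_split:
  fixes f :: "nat \<Rightarrow> 'a::comm_monoid_add"
  shows "(\<Sum>k<a*b. f k) = (\<Sum>i<a. \<Sum>j<b. f (i*b+j))"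
proof -
  have "(\<Sum>k<a*b. f k) = (\<Sum>i<a. \<Sum>k\<in>{i*b..<i*b+b}. f k)" by (rule sum.nat_group[symmetric])
  also have "\<dots> = (\<Sum>i<a. \<Sum>j<b. f (i*b+j))"
    by (rule sum.cong[OF refl]) (subst sum.atLeastLessThan_shift_0, simp add: lessThan_atLeast0 comp_def)
  finally show ?thesis .
qed

lemma cinner_sum: assumes "v \<in> carrier_vec n" "w \<in> carrier_vec n"
  shows "v \<bullet>c w = (\<Sum>i<n. v $ i * cnj (w $ i))"
  using assms unfolding scalar_prod_def by (auto intro!: sum.cong simp: lessThan_atLeast0)

lemma tensor_index: assumes "i < dim_vec v * dim_vec w"
  shows "tensor_vec v w $ i = v $ (i div dim_vec w) * w $ (i mod dim_vec w)"
  using assms unfolding tensor_vec_def by simp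

lemma tensor_carrier: "v \<in> carrier_vec a \<Longrightarrow> w \<in> carrier_vec b \<Longrightarrow> tensor_vec v w \<in> carrier_vec (a*b)"
  unfolding tensor_vec_def carrier_vec_def by simp

lemma divmod_aux: "i < a \<Longrightarrow> j < (b::nat) \<Longrightarrow> (i*b+j) div b = i \<and> (i*b+j) mod b = j"
  by auto

lemma idx_lt: "i < dO \<Longrightarrow> m < dR \<Longrightarrow> i * dR + m < dO * (dR::nat)"
proof -
  assume "i < dO" "m < dR"
  then have "i * dR + m < (i+1) * dR" by simp
  also have "\<dots> \<le> dO * dR" using \<open>i < dO\<close> by (intro mult_right_mono) auto
  finally show ?thesis .
qed

lemma tensor_cinner: assumes "a \<in> carrier_vec na" "c \<in> carrier_vec na" "b \<in> carrier_vec nb" "d \<in> carrier_vec nb"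
  shows "tensor_vec a b \<bullet>c tensor_vec c d = (a \<bullet>c c) * (b \<bullet>c d)"
proof -
  have da: "dim_vec a = na" "dim_vec b = nb" "dim_vec c = na" "dim_vec d = nb" using assms by auto
  have "tensor_vec a b \<bullet>c tensor_vec c d = (\<Sum>k<na*nb. tensor_vec a b $ k * cnj (tensor_vec c d $ k))"
    by (rule cinner_sum) (use assms tensor_carrier in auto)
  also have "\<dots> = (\<Sum>i<na. \<Sum>j<nb. (a$i * cnj (c$i)) * (b$j * cnj (d$j)))"
    unfolding sum_prod_nat_split
  proof (intro sum.cong refl)
    fix i j assume "i \<in> {..<na}" "j \<in> {..<nb}"
    then have ij: "i < na" "j < nb" by auto
    then have lt: "i*nb+j < na*nb" by (rule idx_lt)
    have dm: "(i*nb+j) div nb = i" "(i*nb+j) mod nb = j" using ij by auto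
    show "tensor_vec a b $ (i*nb+j) * cnj (tensor_vec c d $ (i*nb+j)) = (a$i * cnj (c$i)) * (b$j * cnj (d$j))"
      unfolding tensor_index[of "i*nb+j" a b, unfolded da, OF lt] tensor_index[of "i*nb+j" c d, unfolded da, OF lt] dm
      by (simp only: complex_cnj_mult mult_ac)
  qed
  also have "\<dots> = (\<Sum>i<na. a$i * cnj (c$i)) * (\<Sum>j<nb. b$j * cnj (d$j))"
    by (simp only: sum_product)
  finally show ?thesis using cinner_sum[OF assms(1,2)] cinner_sum[OF assms(3,4)] by simp
qed

lemma onb_complete: assumes "onb n v" "a < n" "b < n"
  shows "(\<Sum>k<n. v k $ a * cnj (v k $ b)) = (if a = b then 1 else 0)"
proof -
  define M :: "complex mat" where "M = mat n n (\<lambda>(i,k). v k $ i)"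
  define M' :: "complex mat" where "M' = mat n n (\<lambda>(k,i). cnj (v k $ i))"
  have vc: "\<And>k. k < n \<Longrightarrow> v k \<in> carrier_vec n" using assms(1) unfolding onb_def by auto
  have "M' * M = 1\<^sub>m n"
  proof (rule eq_matI)
    fix k k' assume k: "k < dim_row (1\<^sub>m n :: complex mat)" "k' < dim_col (1\<^sub>m n :: complex mat)"
    then have "(M' * M) $$ (k,k') = (\<Sum>i<n. v k' $ i * cnj (v k $ i))"
      unfolding M_def M'_def by (simp add: scalar_prod_def lessThan_atLeast0 mult.commute)
    also have "\<dots> = v k' \<bullet>c v k" using cinner_sum[OF vc[of k'] vc[of k]] k by simp
    also have "\<dots> = 1\<^sub>m n $$ (k,k')" using assms(1) k unfolding onb_def by auto
    finally show "(M' * M) $$ (k,k') = 1\<^sub>m n $$ (k,k')" .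
  qed (simp_all add: M_def M'_def)
  then have "M * M' = 1\<^sub>m n"
    by (rule mat_mult_left_right_inverse[of M' n M, rotated 2]) (simp_all add: M_def M'_def)
  then have "(M * M') $$ (a,b) = 1\<^sub>m n $$ (a,b)" by simp
  moreover have "(M * M') $$ (a,b) = (\<Sum>k<n. v k $ a * cnj (v k $ b))"
    using assms(2,3) unfolding M_def M'_def by (simp add: scalar_prod_def lessThan_atLeast0)
  ultimately show ?thesis using assms(2,3) by simp
qed


lemma onb_carrier: "onb n v \<Longrightarrow> k < n \<Longrightarrow> v k \<in> carrier_vec n"
  unfolding onb_def by auto

lemma onb_orth: assumes "onb n v" "i < n" "j < n"
  shows "(\<Sum>c<n. v i $ c * cnj (v j $ c)) = (if i = j then 1 else 0)"
  using assms cinner_sum[OF onb_carrier[OF assms(1,2)] onb_carrier[OF assms(1,3)]]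
  unfolding onb_def by auto

lemma mat_adjoint_alt: "mat_adjoint A = mat (dim_col A) (dim_row A) (\<lambda>(i,j). cnj (A $$ (j,i)))"
  unfolding mat_adjoint_def mat_of_rows_def
  by (rule eq_matI) (auto simp: cols_def)

lemma sum_prod_swap:
  fixes x y :: "nat \<Rightarrow> complex" and f g :: "nat \<Rightarrow> nat \<Rightarrow> complex"
  shows "(\<Sum>c<N. (\<Sum>n<K. x n * f n c) * (\<Sum>n'<K. y n' * g n' c))
       = (\<Sum>n<K. \<Sum>n'<K. x n * y n' * (\<Sum>c<N. f n c * g n' c))"
proof -
  have "(\<Sum>c<N. (\<Sum>n<K. x n * f n c) * (\<Sum>n'<K. y n' * g n' c))
     = (\<Sum>c<N. \<Sum>n<K. \<Sum>n'<K. x n * y n' * (f n c * g n' c))"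
    by (simp add: sum_product algebra_simps)
  also have "\<dots> = (\<Sum>n<K. \<Sum>c<N. \<Sum>n'<K. x n * y n' * (f n c * g n' c))"
    by (rule sum.swap)
  also have "\<dots> = (\<Sum>n<K. \<Sum>n'<K. \<Sum>c<N. x n * y n' * (f n c * g n' c))"
    by (intro sum.cong refl sum.swap)
  also have "\<dots> = (\<Sum>n<K. \<Sum>n'<K. x n * y n' * (\<Sum>c<N. f n c * g n' c))"
    by (simp add: sum_distrib_left)
  finally show ?thesis .
qed

lemma delta_sum: "k < (K::nat) \<Longrightarrow> (\<Sum>n<K. f n * (if n = k then 1 else 0)) = (f k :: complex)"
proof -
  assume k: "k < K"
  have "(\<Sum>n<K. f n * (if n = k then 1 else 0)) = (\<Sum>n<K. if n = k then f n else 0)"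
    by (rule sum.cong) auto
  also have "\<dots> = f k" using k by (subst sum.delta) auto
  finally show ?thesis .
qed

lemma delta_sum2: "k < (K::nat) \<Longrightarrow> (\<Sum>n<K. f n * (if k = n then 1 else 0)) = (f k :: complex)"
  using delta_sum[of k K f] by (simp add: eq_commute[of k])

lemma unitary_construct:
  assumes psi: "onb N \<psi>" and chi: "onb N \<chi>"
  defines "U \<equiv> mat N N (\<lambda>(a,b). \<Sum>n<N. \<chi> n $ a * cnj (\<psi> n $ b))"
  shows "unitary_mat N U" "\<And>k. k < N \<Longrightarrow> U *\<^sub>v \<psi> k = \<chi> k"
proof -
  have UC: "U \<in> carrier_mat N N" unfolding U_def by simp
  have adj: "mat_adjoint U = mat N N (\<lambda>(i,j). \<Sum>n<N. \<psi> n $ i * cnj (\<chi> n $ j))"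
    unfolding mat_adjoint_alt U_def by (rule eq_matI) (auto simp: mult.commute)
  have 1: "U * mat_adjoint U = 1\<^sub>m N"
  proof (rule eq_matI)
    fix a b assume ab: "a < dim_row (1\<^sub>m N :: complex mat)" "b < dim_col (1\<^sub>m N :: complex mat)"
    have "(U * mat_adjoint U) $$ (a,b) = (\<Sum>c<N. (\<Sum>n<N. \<chi> n $ a * cnj (\<psi> n $ c)) * (\<Sum>n'<N. cnj (\<chi> n' $ b) * \<psi> n' $ c))"
      using ab by (subst adj) (simp add: U_def scalar_prod_def lessThan_atLeast0 mult.commute)
    also have "\<dots> = (\<Sum>n<N. \<Sum>n'<N. \<chi> n $ a * cnj (\<chi> n' $ b) * (\<Sum>c<N. \<psi> n' $ c * cnj (\<psi> n $ c)))"
      by (subst sum_prod_swap) (simp add: mult.commute)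
    also have "\<dots> = (\<Sum>n<N. \<Sum>n'<N. \<chi> n $ a * cnj (\<chi> n' $ b) * (if n' = n then 1 else 0))"
      by (intro sum.cong refl) (simp add: onb_orth[OF psi])
    also have "\<dots> = (\<Sum>n<N. \<chi> n $ a * cnj (\<chi> n $ b))"
      by (intro sum.cong refl) (simp add: delta_sum)
    also have "\<dots> = 1\<^sub>m N $$ (a,b)" using ab onb_complete[OF chi] by simp
    finally show "(U * mat_adjoint U) $$ (a,b) = 1\<^sub>m N $$ (a,b)" .
  qed (simp_all add: U_def mat_adjoint_alt)
  have 2: "mat_adjoint U * U = 1\<^sub>m N"
  proof (rule eq_matI)
    fix a b assume ab: "a < dim_row (1\<^sub>m N :: complex mat)" "b < dim_col (1\<^sub>m N :: complex mat)"
    have "(mat_adjoint U * U) $$ (a,b) = (\<Sum>c<N. (\<Sum>n<N. \<psi> n $ a * cnj (\<chi> n $ c)) * (\<Sum>n'<N. cnj (\<psi> n' $ b) * \<chi> n' $ c))"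
      using ab by (subst adj) (simp add: U_def scalar_prod_def lessThan_atLeast0 mult.commute)
    also have "\<dots> = (\<Sum>n<N. \<Sum>n'<N. \<psi> n $ a * cnj (\<psi> n' $ b) * (\<Sum>c<N. \<chi> n' $ c * cnj (\<chi> n $ c)))"
      by (subst sum_prod_swap) (simp add: mult.commute)
    also have "\<dots> = (\<Sum>n<N. \<Sum>n'<N. \<psi> n $ a * cnj (\<psi> n' $ b) * (if n' = n then 1 else 0))"
      by (intro sum.cong refl) (simp add: onb_orth[OF chi])
    also have "\<dots> = (\<Sum>n<N. \<psi> n $ a * cnj (\<psi> n $ b))"
      by (intro sum.cong refl) (simp add: delta_sum)
    also have "\<dots> = 1\<^sub>m N $$ (a,b)" using ab onb_complete[OF psi] by simp
    finally show "(mat_adjoint U * U) $$ (a,b) = 1\<^sub>m N $$ (a,b)" .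
  qed (simp_all add: U_def mat_adjoint_alt)
  show "unitary_mat N U" unfolding unitary_mat_def using UC 1 2 by simp
  fix k assume k: "k < N"
  have pk: "\<psi> k \<in> carrier_vec N" "\<chi> k \<in> carrier_vec N" using onb_carrier psi chi k by auto
  show "U *\<^sub>v \<psi> k = \<chi> k"
  proof (rule eq_vecI)
    fix a assume a: "a < dim_vec (\<chi> k)"
    then have a': "a < N" using pk by simp
    have "(U *\<^sub>v \<psi> k) $ a = (\<Sum>b<N. (\<Sum>n<N. \<chi> n $ a * cnj (\<psi> n $ b)) * \<psi> k $ b)"
      using a' pk unfolding U_def by (simp add: scalar_prod_def lessThan_atLeast0)
    also have "\<dots> = (\<Sum>b<N. \<Sum>n<N. \<chi> n $ a * (\<psi> k $ b * cnj (\<psi> n $ b)))"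
      by (simp add: sum_distrib_left sum_distrib_right algebra_simps)
    also have "\<dots> = (\<Sum>n<N. \<Sum>b<N. \<chi> n $ a * (\<psi> k $ b * cnj (\<psi> n $ b)))"
      by (rule sum.swap)
    also have "\<dots> = (\<Sum>n<N. \<chi> n $ a * (\<Sum>b<N. \<psi> k $ b * cnj (\<psi> n $ b)))"
      by (simp add: sum_distrib_left)
    also have "\<dots> = (\<Sum>n<N. \<chi> n $ a * (if k = n then 1 else 0))"
      by (intro sum.cong refl) (simp add: onb_orth[OF psi] k)
    also have "\<dots> = \<chi> k $ a" using k by (simp add: delta_sum2)
    finally show "(U *\<^sub>v \<psi> k) $ a = \<chi> k $ a" .
  qed (use pk UC in simp_all)
qed


lemma onb_inner: "onb n v \<Longrightarrow> i < n \<Longrightarrow> j < n \<Longrightarrow> v i \<bullet>c v j = (if i = j then 1 else 0)"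
  unfolding onb_def by blast

lemma conj_unit: "conjugate (unit_vec n m :: complex vec) = unit_vec n m"
  by (rule eq_vecI) (simp_all add: unit_vec_def)

lemma unit_cinner: "m < n \<Longrightarrow> (v :: complex vec) \<bullet>c unit_vec n m = v $ m"
  unfolding conj_unit by (rule scalar_prod_right_unit)

lemma onb_unit: "onb n (\<lambda>k. unit_vec n k)"
  unfolding onb_def
proof (intro conjI allI impI)
  fix i j assume "i < n" "j < n"
  then show "(unit_vec n i :: complex vec) \<bullet>c unit_vec n j = (if i = j then 1 else 0)"
  proof -
    have "(unit_vec n i :: complex vec) \<bullet>c unit_vec n j = unit_vec n i $ j" by (rule unit_cinner[OF \<open>j < n\<close>])
    also have "\<dots> = (if i = j then 1 else 0)" using \<open>j < n\<close> by (auto simp: unit_vec_def)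
    finally show ?thesis .
  qed
qed simp

lemma onb_tensor: assumes f: "onb a f" and g: "onb b g"
  shows "onb (a*b) (\<lambda>n. tensor_vec (f (n div b)) (g (n mod b)))"
  unfolding onb_def
proof (intro conjI allI impI)
  fix i assume i: "i < a*b"
  have bp: "b > 0" using i by (cases b) auto
  have "i div b < a" "i mod b < b" using i bp by (simp_all add: less_mult_imp_div_less)
  then show "tensor_vec (f (i div b)) (g (i mod b)) \<in> carrier_vec (a*b)"
    by (intro tensor_carrier onb_carrier[OF f] onb_carrier[OF g])
next
  fix i j assume i: "i < a*b" and j: "j < a*b"
  have bp: "b > 0" using i by (cases b) auto
  have d: "i div b < a" "i mod b < b" "j div b < a" "j mod b < b"
    using i j bp by (simp_all add: less_mult_imp_div_less)
  have "tensor_vec (f (i div b)) (g (i mod b)) \<bullet>c tensor_vec (f (j div b)) (g (j mod b))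
     = (f (i div b) \<bullet>c f (j div b)) * (g (i mod b) \<bullet>c g (j mod b))"
    by (rule tensor_cinner[of _ a _ _ b]) (intro onb_carrier[OF f] onb_carrier[OF g] d)+
  also have "\<dots> = (if i div b = j div b then 1 else 0) * (if i mod b = j mod b then 1 else 0)"
    by (simp only: onb_inner[OF f d(1) d(3)] onb_inner[OF g d(2) d(4)])
  also have "\<dots> = (if i = j then 1 else 0)"
    by (auto, metis div_mult_mod_eq)
  finally show "tensor_vec (f (i div b)) (g (i mod b)) \<bullet>c tensor_vec (f (j div b)) (g (j mod b))
     = (if i = j then 1 else 0)" .
qed

lemma onb_tensor_sigma: assumes f: "onb a f" and g: "onb b g"
  and s: "bij_betw \<sigma> {..<a*b} ({..<a} \<times> {..<b})"
  shows "onb (a*b) (\<lambda>n. tensor_vec (f (fst (\<sigma> n))) (g (snd (\<sigma> n))))"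
  unfolding onb_def
proof (intro conjI allI impI)
  fix i assume i: "i < a*b"
  then have "\<sigma> i \<in> {..<a} \<times> {..<b}" using s bij_betwE by blast
  then have "fst (\<sigma> i) < a" "snd (\<sigma> i) < b" by auto
  then show "tensor_vec (f (fst (\<sigma> i))) (g (snd (\<sigma> i))) \<in> carrier_vec (a*b)"
    by (intro tensor_carrier onb_carrier[OF f] onb_carrier[OF g])
next
  fix i j assume i: "i < a*b" and j: "j < a*b"
  have "\<sigma> i \<in> {..<a} \<times> {..<b}" "\<sigma> j \<in> {..<a} \<times> {..<b}" using s i j bij_betwE by blast+
  then have d: "fst (\<sigma> i) < a" "snd (\<sigma> i) < b" "fst (\<sigma> j) < a" "snd (\<sigma> j) < b" by auto
  have inj: "\<sigma> i = \<sigma> j \<longleftrightarrow> i = j" using s i j unfolding bij_betw_def inj_on_def by auto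
  have "tensor_vec (f (fst (\<sigma> i))) (g (snd (\<sigma> i))) \<bullet>c tensor_vec (f (fst (\<sigma> j))) (g (snd (\<sigma> j)))
     = (f (fst (\<sigma> i)) \<bullet>c f (fst (\<sigma> j))) * (g (snd (\<sigma> i)) \<bullet>c g (snd (\<sigma> j)))"
    by (rule tensor_cinner[of _ a _ _ b]) (intro onb_carrier[OF f] onb_carrier[OF g] d)+
  also have "\<dots> = (if fst (\<sigma> i) = fst (\<sigma> j) then 1 else 0) * (if snd (\<sigma> i) = snd (\<sigma> j) then 1 else 0)"
    by (simp only: onb_inner[OF f d(1) d(3)] onb_inner[OF g d(2) d(4)])
  also have "\<dots> = (if i = j then 1 else 0)" using inj by (auto simp: prod_eq_iff)
  finally show "tensor_vec (f (fst (\<sigma> i))) (g (snd (\<sigma> i))) \<bullet>c tensor_vec (f (fst (\<sigma> j))) (g (snd (\<sigma> j)))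
     = (if i = j then 1 else 0)" .
qed


lemma bessel_sum:
  fixes u :: "nat \<Rightarrow> complex" and v :: "nat \<Rightarrow> nat \<Rightarrow> complex"
  assumes orth: "\<And>k k'. k < K \<Longrightarrow> k' < K \<Longrightarrow> (\<Sum>i<n. v k i * cnj (v k' i)) = (if k = k' then 1 else 0)"
  shows "(\<Sum>k<K. (cmod (\<Sum>i<n. u i * cnj (v k i)))\<^sup>2) \<le> (\<Sum>i<n. (cmod (u i))\<^sup>2)"
proof -
  define a where "a k = (\<Sum>i<n. u i * cnj (v k i))" for k
  define w where "w i = u i - (\<Sum>k<K. a k * v k i)" for i
  define S where "S = (\<Sum>k<K. a k * cnj (a k))"
  have t2: "(\<Sum>i<n. u i * (\<Sum>k<K. cnj (a k) * cnj (v k i))) = S"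
  proof -
    have "(\<Sum>i<n. u i * (\<Sum>k<K. cnj (a k) * cnj (v k i))) = (\<Sum>i<n. \<Sum>k<K. cnj (a k) * (u i * cnj (v k i)))"
      by (simp add: sum_distrib_left algebra_simps)
    also have "\<dots> = (\<Sum>k<K. \<Sum>i<n. cnj (a k) * (u i * cnj (v k i)))" by (rule sum.swap)
    also have "\<dots> = (\<Sum>k<K. cnj (a k) * (\<Sum>i<n. u i * cnj (v k i)))" by (simp add: sum_distrib_left)
    finally have "(\<Sum>i<n. u i * (\<Sum>k<K. cnj (a k) * cnj (v k i))) = (\<Sum>k<K. cnj (a k) * (\<Sum>i<n. u i * cnj (v k i)))" .
    then show ?thesis unfolding S_def a_def by (simp add: mult.commute)
  qed
  have t3: "(\<Sum>i<n. (\<Sum>k<K. a k * v k i) * cnj (u i)) = S"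
  proof -
    have "(\<Sum>i<n. (\<Sum>k<K. a k * v k i) * cnj (u i)) = (\<Sum>i<n. \<Sum>k<K. a k * (v k i * cnj (u i)))"
      by (simp add: sum_distrib_left sum_distrib_right algebra_simps)
    also have "\<dots> = (\<Sum>k<K. \<Sum>i<n. a k * (v k i * cnj (u i)))" by (rule sum.swap)
    also have "\<dots> = (\<Sum>k<K. a k * cnj (\<Sum>i<n. u i * cnj (v k i)))" by (simp add: sum_distrib_left cnj_sum mult_ac)
    finally have "(\<Sum>i<n. (\<Sum>k<K. a k * v k i) * cnj (u i)) = (\<Sum>k<K. a k * cnj (\<Sum>i<n. u i * cnj (v k i)))" .
    then show ?thesis unfolding S_def a_def by simp
  qed
  have t4: "(\<Sum>i<n. (\<Sum>k<K. a k * v k i) * (\<Sum>k'<K. cnj (a k') * cnj (v k' i))) = S"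
  proof -
    have "(\<Sum>i<n. (\<Sum>k<K. a k * v k i) * (\<Sum>k'<K. cnj (a k') * cnj (v k' i)))
        = (\<Sum>k<K. \<Sum>k'<K. a k * cnj (a k') * (\<Sum>i<n. v k i * cnj (v k' i)))"
      by (rule sum_prod_swap)
    also have "\<dots> = (\<Sum>k<K. \<Sum>k'<K. a k * cnj (a k') * (if k = k' then 1 else 0))"
      by (intro sum.cong refl) (simp add: orth)
    also have "\<dots> = S" unfolding S_def
      by (intro sum.cong refl) (simp add: delta_sum2)
    finally show ?thesis .
  qed
  define A where "A i = (\<Sum>k<K. a k * v k i)" for i
  define B where "B i = (\<Sum>k<K. cnj (a k) * cnj (v k i))" for i
  have pt: "w i * cnj (w i) = u i * cnj (u i) - u i * B i - A i * cnj (u i) + A i * B i" for i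
  proof -
    have cw: "cnj (w i) = cnj (u i) - B i" unfolding w_def B_def by (simp add: cnj_sum)
    have wA: "w i = u i - A i" unfolding w_def A_def ..
    show ?thesis by (subst cw, subst wA) (simp add: algebra_simps)
  qed
  have "(\<Sum>i<n. w i * cnj (w i)) = (\<Sum>i<n. u i * cnj (u i)) - (\<Sum>i<n. u i * B i)
     - (\<Sum>i<n. A i * cnj (u i)) + (\<Sum>i<n. A i * B i)"
    unfolding pt by (simp only: sum.distrib sum_subtractf)
  also have "\<dots> = (\<Sum>i<n. u i * cnj (u i)) - S"
    unfolding A_def B_def t2 t3 t4 by simp
  finally have eq: "(\<Sum>i<n. w i * cnj (w i)) = (\<Sum>i<n. u i * cnj (u i)) - S" .
  have r: "\<And>z. z * cnj z = complex_of_real ((cmod z)\<^sup>2)" by (metis complex_norm_square)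
  have e1: "(\<Sum>i<n. w i * cnj (w i)) = complex_of_real (\<Sum>i<n. (cmod (w i))\<^sup>2)"
    by (simp only: r of_real_sum)
  have e2: "(\<Sum>i<n. u i * cnj (u i)) = complex_of_real (\<Sum>i<n. (cmod (u i))\<^sup>2)"
    by (simp only: r of_real_sum)
  have e3: "S = complex_of_real (\<Sum>k<K. (cmod (a k))\<^sup>2)"
    unfolding S_def by (simp only: r of_real_sum)
  have "complex_of_real (\<Sum>i<n. (cmod (w i))\<^sup>2) = complex_of_real (\<Sum>i<n. (cmod (u i))\<^sup>2) - complex_of_real (\<Sum>k<K. (cmod (a k))\<^sup>2)"
    using eq unfolding e1 e2 e3 .
  then have "(\<Sum>i<n. (cmod (w i))\<^sup>2) = (\<Sum>i<n. (cmod (u i))\<^sup>2) - (\<Sum>k<K. (cmod (a k))\<^sup>2)"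
    by (metis of_real_diff of_real_eq_iff)
  moreover have "(\<Sum>i<n. (cmod (w i))\<^sup>2) \<ge> 0" by (intro sum_nonneg) auto
  ultimately show ?thesis unfolding a_def by linarith
qed


lemma norm_sq_cinner: assumes u: "u \<in> carrier_vec n"
  shows "complex_of_real (\<Sum>i<n. (cmod (u $ i))\<^sup>2) = u \<bullet>c u"
proof -
  have "u \<bullet>c u = (\<Sum>i<n. u $ i * cnj (u $ i))" by (rule cinner_sum[OF u u])
  also have "\<dots> = (\<Sum>i<n. complex_of_real ((cmod (u $ i))\<^sup>2))"
    by (intro sum.cong refl) (rule complex_norm_square[symmetric])
  also have "\<dots> = complex_of_real (\<Sum>i<n. (cmod (u $ i))\<^sup>2)" by (rule of_real_sum[symmetric])
  finally show ?thesis by (rule sym)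
qed

lemma bessel_vec:
  fixes K :: nat
  assumes u: "u \<in> carrier_vec n" and vc: "\<And>k. k < K \<Longrightarrow> v k \<in> carrier_vec n"
    and orth: "\<And>k k'. k < K \<Longrightarrow> k' < K \<Longrightarrow> v k \<bullet>c v k' = (if k = k' then 1 else 0)"
  shows "(\<Sum>k<K. (cmod (u \<bullet>c v k))\<^sup>2) \<le> (\<Sum>i<n. (cmod (u $ i))\<^sup>2)"
proof -
  have "(\<Sum>k<K. (cmod (\<Sum>i<n. u $ i * cnj (v k $ i)))\<^sup>2) \<le> (\<Sum>i<n. (cmod (u $ i))\<^sup>2)"
  proof (rule bessel_sum[where v="\<lambda>k i. v k $ i"])
    fix k k' assume kk: "k < K" "k' < K"
    have "(\<Sum>i<n. v k $ i * cnj (v k' $ i)) = v k \<bullet>c v k'"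
      by (rule cinner_sum[OF vc[OF kk(1)] vc[OF kk(2)], symmetric])
    also have "\<dots> = (if k = k' then 1 else 0)" by (rule orth[OF kk])
    finally show "(\<Sum>i<n. v k $ i * cnj (v k' $ i)) = (if k = k' then 1 else 0)" .
  qed
  moreover have "(\<Sum>k<K. (cmod (u \<bullet>c v k))\<^sup>2) = (\<Sum>k<K. (cmod (\<Sum>i<n. u $ i * cnj (v k $ i)))\<^sup>2)"
  proof (rule sum.cong[OF refl])
    fix k assume "k \<in> {..<K}"
    then have k: "k < K" by simp
    show "(cmod (u \<bullet>c v k))\<^sup>2 = (cmod (\<Sum>i<n. u $ i * cnj (v k $ i)))\<^sup>2"
      unfolding cinner_sum[OF u vc[OF k]] ..
  qed
  ultimately show ?thesis by (simp only:)
qed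

lemma cinner_conj: assumes u: "u \<in> carrier_vec n" and v: "v \<in> carrier_vec n"
  shows "cmod (u \<bullet>c v) = cmod (v \<bullet>c u)"
proof -
  have "u \<bullet>c v = cnj (v \<bullet>c u)" unfolding cinner_sum[OF u v] cinner_sum[OF v u]
    by (simp add: cnj_sum mult.commute)
  then show ?thesis by simp
qed

lemma unitary_inner:
  assumes U: "unitary_mat N U" and x: "x \<in> carrier_vec N" and y: "y \<in> carrier_vec N"
  shows "(U *\<^sub>v x) \<bullet>c (U *\<^sub>v y) = x \<bullet>c y"
proof -
  have UC: "U \<in> carrier_mat N N" and UU: "mat_adjoint U * U = 1\<^sub>m N" using U unfolding unitary_mat_def by auto
  have ent: "(\<Sum>a<N. U $$ (a,c) * cnj (U $$ (a,d))) = (if d = c then 1 else 0)" if "c < N" "d < N" for c d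
  proof -
    have "(mat_adjoint U * U) $$ (d,c) = (\<Sum>a<N. U $$ (a,c) * cnj (U $$ (a,d)))"
      using that UC by (simp add: mat_adjoint_alt scalar_prod_def lessThan_atLeast0 mult.commute)
    then show ?thesis using UU that by simp
  qed
  have "(U *\<^sub>v x) \<bullet>c (U *\<^sub>v y) = (\<Sum>a<N. (\<Sum>c<N. x $ c * U $$ (a,c)) * (\<Sum>d<N. cnj (y $ d) * cnj (U $$ (a,d))))"
  proof -
    have c1: "U *\<^sub>v x \<in> carrier_vec N" "U *\<^sub>v y \<in> carrier_vec N" using UC x y by auto
    have "(U *\<^sub>v x) \<bullet>c (U *\<^sub>v y) = (\<Sum>a<N. (U *\<^sub>v x) $ a * cnj ((U *\<^sub>v y) $ a))"
      by (rule cinner_sum[OF c1])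
    also have "\<dots> = (\<Sum>a<N. (\<Sum>c<N. x $ c * U $$ (a,c)) * (\<Sum>d<N. cnj (y $ d) * cnj (U $$ (a,d))))"
    proof (rule sum.cong[OF refl])
      fix a assume "a \<in> {..<N}"
      then have a: "a < N" by simp
      have "(U *\<^sub>v x) $ a = (\<Sum>c<N. x $ c * U $$ (a,c))"
        using a UC x by (simp add: scalar_prod_def lessThan_atLeast0 mult.commute)
      moreover have "(U *\<^sub>v y) $ a = (\<Sum>d<N. y $ d * U $$ (a,d))"
        using a UC y by (simp add: scalar_prod_def lessThan_atLeast0 mult.commute)
      ultimately show "(U *\<^sub>v x) $ a * cnj ((U *\<^sub>v y) $ a) = (\<Sum>c<N. x $ c * U $$ (a,c)) * (\<Sum>d<N. cnj (y $ d) * cnj (U $$ (a,d)))"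
        by (simp only: cnj_sum complex_cnj_mult)
    qed
    finally show ?thesis .
  qed
  also have "\<dots> = (\<Sum>c<N. \<Sum>d<N. x $ c * cnj (y $ d) * (\<Sum>a<N. U $$ (a,c) * cnj (U $$ (a,d))))"
    by (rule sum_prod_swap)
  also have "\<dots> = (\<Sum>c<N. \<Sum>d<N. x $ c * cnj (y $ d) * (if d = c then 1 else 0))"
    by (intro sum.cong refl) (simp add: ent)
  also have "\<dots> = (\<Sum>c<N. x $ c * cnj (y $ c))"
    by (intro sum.cong refl) (simp add: delta_sum)
  also have "\<dots> = x \<bullet>c y" using cinner_sum[OF x y] by simp
  finally show ?thesis .
qed


lemma mult_vec_idx: assumes UC: "U \<in> carrier_mat N N" and x: "x \<in> carrier_vec N" and a: "a < N"
  shows "(U *\<^sub>v x) $ a = (\<Sum>c<N. U $$ (a,c) * x $ c)"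
proof -
  have "(U *\<^sub>v x) $ a = row U a \<bullet> x" using a UC by simp
  also have "\<dots> = (\<Sum>c\<in>{0..<N}. row U a $ c * x $ c)" using x unfolding scalar_prod_def by simp
  also have "\<dots> = (\<Sum>c<N. U $$ (a,c) * x $ c)" unfolding lessThan_atLeast0
    by (rule sum.cong[OF refl]) (use UC a in simp)
  finally show ?thesis .
qed

lemma conj_form:
  assumes UC: "U \<in> carrier_mat N N" and xc: "\<And>n. n < K \<Longrightarrow> x n \<in> carrier_vec N"
  shows "U * mat N N (\<lambda>(c,d). \<Sum>n<K. q n * x n $ c * cnj (x n $ d)) * mat_adjoint U
       = mat N N (\<lambda>(a,b). \<Sum>n<K. q n * (U *\<^sub>v x n) $ a * cnj ((U *\<^sub>v x n) $ b))"
proof (rule eq_matI)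
  fix a b assume ab: "a < dim_row (mat N N (\<lambda>(a,b). \<Sum>n<K. q n * (U *\<^sub>v x n) $ a * cnj ((U *\<^sub>v x n) $ b)))"
     "b < dim_col (mat N N (\<lambda>(a,b). \<Sum>n<K. q n * (U *\<^sub>v x n) $ a * cnj ((U *\<^sub>v x n) $ b)))"
  then have a: "a < N" and b: "b < N" by auto
  let ?T = "\<lambda>d c n. q n * U $$ (a,c) * x n $ c * cnj (x n $ d) * cnj (U $$ (b,d))"
  have "(U * mat N N (\<lambda>(c,d). \<Sum>n<K. q n * x n $ c * cnj (x n $ d)) * mat_adjoint U) $$ (a,b)
      = (\<Sum>d<N. (\<Sum>c<N. U $$ (a,c) * (\<Sum>n<K. q n * x n $ c * cnj (x n $ d))) * cnj (U $$ (b,d)))"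
    using a b UC by (simp add: mat_adjoint_alt scalar_prod_def lessThan_atLeast0)
  also have "\<dots> = (\<Sum>d<N. \<Sum>c<N. \<Sum>n<K. ?T d c n)"
    by (simp add: sum_distrib_left sum_distrib_right algebra_simps)
  also have "\<dots> = (\<Sum>n<K. \<Sum>c<N. \<Sum>d<N. ?T d c n)"
  proof -
    have "(\<Sum>d<N. \<Sum>c<N. \<Sum>n<K. ?T d c n) = (\<Sum>d<N. \<Sum>n<K. \<Sum>c<N. ?T d c n)"
      by (intro sum.cong refl sum.swap)
    also have "\<dots> = (\<Sum>n<K. \<Sum>d<N. \<Sum>c<N. ?T d c n)" by (rule sum.swap)
    also have "\<dots> = (\<Sum>n<K. \<Sum>c<N. \<Sum>d<N. ?T d c n)" by (intro sum.cong refl sum.swap)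
    finally show ?thesis .
  qed
  also have "\<dots> = (\<Sum>n<K. q n * (\<Sum>c<N. U $$ (a,c) * x n $ c) * cnj (\<Sum>d<N. U $$ (b,d) * x n $ d))"
    by (simp add: sum_distrib_left sum_distrib_right algebra_simps cnj_sum)
  also have "\<dots> = (\<Sum>n<K. q n * (U *\<^sub>v x n) $ a * cnj ((U *\<^sub>v x n) $ b))"
  proof (rule sum.cong[OF refl])
    fix n assume "n \<in> {..<K}"
    then have n: "n < K" by simp
    show "q n * (\<Sum>c<N. U $$ (a,c) * x n $ c) * cnj (\<Sum>d<N. U $$ (b,d) * x n $ d)
        = q n * (U *\<^sub>v x n) $ a * cnj ((U *\<^sub>v x n) $ b)"
      by (simp only: mult_vec_idx[OF UC xc[OF n] a] mult_vec_idx[OF UC xc[OF n] b])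
  qed
  finally show "(U * mat N N (\<lambda>(c,d). \<Sum>n<K. q n * x n $ c * cnj (x n $ d)) * mat_adjoint U) $$ (a,b)
      = mat N N (\<lambda>(a,b). \<Sum>n<K. q n * (U *\<^sub>v x n) $ a * cnj ((U *\<^sub>v x n) $ b)) $$ (a,b)"
    using a b by simp
qed (use UC in \<open>auto simp: mat_adjoint_alt\<close>)


lemma tensor_spec_form:
  assumes phi: "onb dO \<phi>" and xi: "onb dR \<xi>"
    and s: "bij_betw \<sigma> {..<dO*dR} ({..<dO} \<times> {..<dR})"
  shows "tensor_mat (spec_mat dO oc \<phi>) (spec_mat dR r \<xi>)
    = mat (dO*dR) (dO*dR) (\<lambda>(c,d). \<Sum>n<dO*dR. complex_of_real (oc (fst (\<sigma> n)) * r (snd (\<sigma> n)))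
         * tensor_vec (\<phi> (fst (\<sigma> n))) (\<xi> (snd (\<sigma> n))) $ c
         * cnj (tensor_vec (\<phi> (fst (\<sigma> n))) (\<xi> (snd (\<sigma> n))) $ d))"
proof (rule eq_matI)
  let ?N = "dO*dR"
  fix c d assume cd: "c < dim_row (mat ?N ?N (\<lambda>(c,d). \<Sum>n<dO*dR. complex_of_real (oc (fst (\<sigma> n)) * r (snd (\<sigma> n)))
         * tensor_vec (\<phi> (fst (\<sigma> n))) (\<xi> (snd (\<sigma> n))) $ c
         * cnj (tensor_vec (\<phi> (fst (\<sigma> n))) (\<xi> (snd (\<sigma> n))) $ d)))"
    "d < dim_col (mat ?N ?N (\<lambda>(c,d). \<Sum>n<dO*dR. complex_of_real (oc (fst (\<sigma> n)) * r (snd (\<sigma> n)))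
         * tensor_vec (\<phi> (fst (\<sigma> n))) (\<xi> (snd (\<sigma> n))) $ c
         * cnj (tensor_vec (\<phi> (fst (\<sigma> n))) (\<xi> (snd (\<sigma> n))) $ d)))"
  then have c: "c < ?N" and d: "d < ?N" by auto
  have bp: "dR > 0" using c by (cases dR) auto
  have dd: "c div dR < dO" "d div dR < dO" "c mod dR < dR" "d mod dR < dR"
    using c d bp by (auto simp: less_mult_imp_div_less)
  define F where "F l m = complex_of_real (oc l * r m) * (\<phi> l $ (c div dR) * \<xi> m $ (c mod dR))
       * cnj (\<phi> l $ (d div dR) * \<xi> m $ (d mod dR))" for l m
  have "tensor_mat (spec_mat dO oc \<phi>) (spec_mat dR r \<xi>) $$ (c,d)
     = (\<Sum>l<dO. complex_of_real (oc l) * \<phi> l $ (c div dR) * cnj (\<phi> l $ (d div dR)))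
     * (\<Sum>m<dR. complex_of_real (r m) * \<xi> m $ (c mod dR) * cnj (\<xi> m $ (d mod dR)))"
    using c d dd unfolding tensor_mat_def spec_mat_def by simp
  also have "\<dots> = (\<Sum>l<dO. \<Sum>m<dR. F l m)"
    unfolding F_def by (simp add: sum_product algebra_simps)
  also have "\<dots> = (\<Sum>x\<in>{..<dO} \<times> {..<dR}. case_prod F x)"
    by (rule sum.cartesian_product)
  also have "\<dots> = (\<Sum>n<?N. case_prod F (\<sigma> n))"
    by (rule sum.reindex_bij_betw[symmetric, OF s])
  also have "\<dots> = (\<Sum>n<?N. complex_of_real (oc (fst (\<sigma> n)) * r (snd (\<sigma> n)))
         * tensor_vec (\<phi> (fst (\<sigma> n))) (\<xi> (snd (\<sigma> n))) $ c
         * cnj (tensor_vec (\<phi> (fst (\<sigma> n))) (\<xi> (snd (\<sigma> n))) $ d))"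
  proof (intro sum.cong refl)
    fix n assume n: "n \<in> {..<?N}"
    then have "\<sigma> n \<in> {..<dO} \<times> {..<dR}" using s bij_betwE by blast
    then have sn: "fst (\<sigma> n) < dO" "snd (\<sigma> n) < dR" by auto
    have dims: "dim_vec (\<phi> (fst (\<sigma> n))) = dO" "dim_vec (\<xi> (snd (\<sigma> n))) = dR"
      using onb_carrier[OF phi sn(1)] onb_carrier[OF xi sn(2)] by auto
    show "case_prod F (\<sigma> n) = complex_of_real (oc (fst (\<sigma> n)) * r (snd (\<sigma> n)))
         * tensor_vec (\<phi> (fst (\<sigma> n))) (\<xi> (snd (\<sigma> n))) $ c
         * cnj (tensor_vec (\<phi> (fst (\<sigma> n))) (\<xi> (snd (\<sigma> n))) $ d)"
      using c d dims unfolding F_def by (simp add: tensor_index split: prod.splits)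
  qed
  finally show "tensor_mat (spec_mat dO oc \<phi>) (spec_mat dR r \<xi>) $$ (c,d) = mat ?N ?N (\<lambda>(c,d). \<Sum>n<dO*dR. complex_of_real (oc (fst (\<sigma> n)) * r (snd (\<sigma> n)))
         * tensor_vec (\<phi> (fst (\<sigma> n))) (\<xi> (snd (\<sigma> n))) $ c
         * cnj (tensor_vec (\<phi> (fst (\<sigma> n))) (\<xi> (snd (\<sigma> n))) $ d)) $$ (c,d)"
    using c d by simp
qed (auto simp: tensor_mat_def spec_mat_def)


lemma cinner_w:
  assumes y: "y \<in> carrier_vec (dO*dR)" and phi0: "\<phi>0 \<in> carrier_vec dO" and m: "m < dR"
  shows "y \<bullet>c tensor_vec \<phi>0 (unit_vec dR m) = (\<Sum>i<dO. y $ (i*dR+m) * cnj (\<phi>0 $ i))"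
proof -
  have tc: "tensor_vec \<phi>0 (unit_vec dR m) \<in> carrier_vec (dO*dR)"
    using phi0 by (intro tensor_carrier) auto
  have "y \<bullet>c tensor_vec \<phi>0 (unit_vec dR m) = (\<Sum>k<dO*dR. y $ k * cnj (tensor_vec \<phi>0 (unit_vec dR m) $ k))"
    by (rule cinner_sum[OF y tc])
  also have "\<dots> = (\<Sum>i<dO. \<Sum>j<dR. y $ (i*dR+j) * cnj (\<phi>0 $ i * (if j = m then 1 else 0)))"
    unfolding sum_prod_nat_split
  proof (intro sum.cong refl)
    fix i j assume "i \<in> {..<dO}" "j \<in> {..<dR}"
    then have ij: "i < dO" "j < dR" by auto
    have dp: "dim_vec \<phi>0 = dO" using phi0 by simp
    have lt: "i*dR+j < dim_vec \<phi>0 * dim_vec (unit_vec dR m)" using dp idx_lt[OF ij] by simp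
    have "tensor_vec \<phi>0 (unit_vec dR m) $ (i*dR+j) = \<phi>0 $ i * (if j = m then 1 else 0)"
      unfolding tensor_index[OF lt] using ij m by simp
    then show "y $ (i*dR+j) * cnj (tensor_vec \<phi>0 (unit_vec dR m) $ (i*dR+j)) =
          y $ (i*dR+j) * cnj (\<phi>0 $ i * (if j = m then 1 else 0))" by simp
  qed
  also have "\<dots> = (\<Sum>i<dO. y $ (i*dR+m) * cnj (\<phi>0 $ i))"
  proof (intro sum.cong refl)
    fix i
    have "(\<Sum>j<dR. y $ (i*dR+j) * cnj (\<phi>0 $ i * (if j = m then 1 else 0)))
        = (\<Sum>j<dR. (if j = m then y $ (i*dR+j) * cnj (\<phi>0 $ i) else 0))"
      by (intro sum.cong refl) auto
    also have "\<dots> = y $ (i*dR+m) * cnj (\<phi>0 $ i)" using m by (subst sum.delta) auto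
    finally show "(\<Sum>j<dR. y $ (i*dR+j) * cnj (\<phi>0 $ i * (if j = m then 1 else 0))) = y $ (i*dR+m) * cnj (\<phi>0 $ i)" .
  qed
  finally show ?thesis .
qed

lemma ptrace_form:
  assumes phi0: "\<phi>0 \<in> carrier_vec dO" and yc: "\<And>n. n < K \<Longrightarrow> y n \<in> carrier_vec (dO*dR)"
  shows "prob_in \<phi>0 (partial_trace_R dO dR (mat (dO*dR) (dO*dR) (\<lambda>(a,b). \<Sum>n<K. complex_of_real (p n) * y n $ a * cnj (y n $ b))))
     = (\<Sum>n<K. p n * (\<Sum>m<dR. (cmod (y n \<bullet>c tensor_vec \<phi>0 (unit_vec dR m)))\<^sup>2))"
proof -
  let ?A = "mat (dO*dR) (dO*dR) (\<lambda>(a,b). \<Sum>n<K. complex_of_real (p n) * y n $ a * cnj (y n $ b))"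
  let ?P = "partial_trace_R dO dR ?A"
  let ?T = "\<lambda>i j m n. complex_of_real (p n) * (y n $ (i*dR+m) * cnj (\<phi>0 $ i)) * (cnj (y n $ (j*dR+m)) * \<phi>0 $ j)"
  have Pij: "?P $$ (i,j) = (\<Sum>m<dR. \<Sum>n<K. complex_of_real (p n) * y n $ (i*dR+m) * cnj (y n $ (j*dR+m)))"
    if "i < dO" "j < dO" for i j
    using that idx_lt unfolding partial_trace_R_def by simp
  have "(?P *\<^sub>v \<phi>0) \<bullet>c \<phi>0 = (\<Sum>i<dO. (\<Sum>j<dO. ?P $$ (i,j) * \<phi>0 $ j) * cnj (\<phi>0 $ i))"
  proof -
    have Pc: "?P \<in> carrier_mat dO dO" by (simp add: partial_trace_R_def)
    have Pv: "?P *\<^sub>v \<phi>0 \<in> carrier_vec dO" using Pc phi0 by simp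
    show ?thesis unfolding cinner_sum[OF Pv phi0]
    proof (rule sum.cong[OF refl])
      fix i assume "i \<in> {..<dO}"
      then have i: "i < dO" by simp
      show "(?P *\<^sub>v \<phi>0) $ i * cnj (\<phi>0 $ i) = (\<Sum>j<dO. ?P $$ (i,j) * \<phi>0 $ j) * cnj (\<phi>0 $ i)"
        by (simp only: mult_vec_idx[OF Pc phi0 i])
    qed
  qed
  also have "\<dots> = (\<Sum>i<dO. \<Sum>j<dO. \<Sum>m<dR. \<Sum>n<K. ?T i j m n)"
  proof (rule sum.cong[OF refl])
    fix i assume "i \<in> {..<dO}"
    then have i: "i < dO" by simp
    have "(\<Sum>j<dO. ?P $$ (i,j) * \<phi>0 $ j) * cnj (\<phi>0 $ i) = (\<Sum>j<dO. ?P $$ (i,j) * \<phi>0 $ j * cnj (\<phi>0 $ i))"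
      by (rule sum_distrib_right)
    also have "\<dots> = (\<Sum>j<dO. (\<Sum>m<dR. \<Sum>n<K. complex_of_real (p n) * y n $ (i*dR+m) * cnj (y n $ (j*dR+m))) * \<phi>0 $ j * cnj (\<phi>0 $ i))"
    proof (rule sum.cong[OF refl])
      fix j assume "j \<in> {..<dO}"
      then have j: "j < dO" by simp
      show "?P $$ (i,j) * \<phi>0 $ j * cnj (\<phi>0 $ i) = (\<Sum>m<dR. \<Sum>n<K. complex_of_real (p n) * y n $ (i*dR+m) * cnj (y n $ (j*dR+m))) * \<phi>0 $ j * cnj (\<phi>0 $ i)"
        by (simp only: Pij[OF i j])
    qed
    also have "\<dots> = (\<Sum>j<dO. \<Sum>m<dR. \<Sum>n<K. ?T i j m n)"
      by (simp add: sum_distrib_left sum_distrib_right algebra_simps)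
    finally show "(\<Sum>j<dO. ?P $$ (i,j) * \<phi>0 $ j) * cnj (\<phi>0 $ i) = (\<Sum>j<dO. \<Sum>m<dR. \<Sum>n<K. ?T i j m n)" .
  qed
  also have "\<dots> = (\<Sum>n<K. \<Sum>m<dR. \<Sum>i<dO. \<Sum>j<dO. ?T i j m n)"
  proof -
    have "(\<Sum>i<dO. \<Sum>j<dO. \<Sum>m<dR. \<Sum>n<K. ?T i j m n) = (\<Sum>i<dO. \<Sum>j<dO. \<Sum>n<K. \<Sum>m<dR. ?T i j m n)"
      by (intro sum.cong refl sum.swap)
    also have "\<dots> = (\<Sum>i<dO. \<Sum>n<K. \<Sum>j<dO. \<Sum>m<dR. ?T i j m n)"
      by (intro sum.cong refl sum.swap)
    also have "\<dots> = (\<Sum>n<K. \<Sum>i<dO. \<Sum>j<dO. \<Sum>m<dR. ?T i j m n)"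
      by (rule sum.swap)
    also have "\<dots> = (\<Sum>n<K. \<Sum>i<dO. \<Sum>m<dR. \<Sum>j<dO. ?T i j m n)"
      by (intro sum.cong refl sum.swap)
    also have "\<dots> = (\<Sum>n<K. \<Sum>m<dR. \<Sum>i<dO. \<Sum>j<dO. ?T i j m n)"
      by (intro sum.cong refl sum.swap)
    finally show ?thesis .
  qed
  also have "\<dots> = (\<Sum>n<K. complex_of_real (p n) * (\<Sum>m<dR. (y n \<bullet>c tensor_vec \<phi>0 (unit_vec dR m)) * cnj (y n \<bullet>c tensor_vec \<phi>0 (unit_vec dR m))))"
  proof (intro sum.cong refl)
    fix n assume n: "n \<in> {..<K}"
    show "(\<Sum>m<dR. \<Sum>i<dO. \<Sum>j<dO. ?T i j m n) = complex_of_real (p n) * (\<Sum>m<dR. (y n \<bullet>c tensor_vec \<phi>0 (unit_vec dR m)) * cnj (y n \<bullet>c tensor_vec \<phi>0 (unit_vec dR m)))"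
      unfolding sum_distrib_left
    proof (intro sum.cong refl)
      fix m assume m: "m \<in> {..<dR}"
      show "(\<Sum>i<dO. \<Sum>j<dO. ?T i j m n) = complex_of_real (p n) * ((y n \<bullet>c tensor_vec \<phi>0 (unit_vec dR m)) * cnj (y n \<bullet>c tensor_vec \<phi>0 (unit_vec dR m)))"
        using cinner_w[OF yc phi0, of n m] n m
        by (simp add: sum_distrib_left sum_distrib_right algebra_simps cnj_sum)
    qed
  qed
  also have "\<dots> = complex_of_real (\<Sum>n<K. p n * (\<Sum>m<dR. (cmod (y n \<bullet>c tensor_vec \<phi>0 (unit_vec dR m)))\<^sup>2))"
    by (simp add: complex_norm_square[symmetric])
  finally show ?thesis unfolding prob_in_def by simp
qed


lemma rearr:
  fixes p c :: "nat \<Rightarrow> real"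
  assumes dR: "0 < dR" "dR \<le> N"
    and mono: "\<forall>i j. i \<le> j \<longrightarrow> j < N \<longrightarrow> p j \<le> p i"
    and pnn: "\<And>n. n < N \<Longrightarrow> p n \<ge> 0"
    and c01: "\<And>n. n < N \<Longrightarrow> 0 \<le> c n \<and> c n \<le> 1"
    and csum: "(\<Sum>n<N. c n) \<le> real dR"
  shows "(\<Sum>n<N. p n * c n) \<le> (\<Sum>n<dR. p n)"
proof -
  define t where "t = p (dR - 1)"
  have t0: "t \<ge> 0" unfolding t_def using pnn dR by auto
  define h where "h n = (if n < dR then p n - t else 0)" for n
  have pt: "p n * c n \<le> t * c n + h n" if n: "n < N" for n
  proof (cases "n < dR")
    case True
    then have pn: "p n \<ge> t" unfolding t_def using mono dR by auto
    have c1: "1 - c n \<ge> 0" using c01[OF n] by simp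
    have nn: "(p n - t) * (1 - c n) \<ge> 0" using pn c1 by simp
    have e: "(p n - t) * (1 - c n) = p n - p n * c n - t + t * c n" by (simp add: algebra_simps)
    have "h n = p n - t" unfolding h_def using True by simp
    then show ?thesis using nn e by linarith
  next
    case False
    then have "p n \<le> t" unfolding t_def using mono n by auto
    then have "p n * c n \<le> t * c n" using c01[OF n] by (simp add: mult_right_mono)
    moreover have "h n = 0" unfolding h_def using False by simp
    ultimately show ?thesis by simp
  qed
  have s1: "(\<Sum>n<N. p n * c n) \<le> (\<Sum>n<N. t * c n + h n)"
  proof (rule sum_mono)
    fix n assume "n \<in> {..<N}"
    then show "p n * c n \<le> t * c n + h n" using pt by simp
  qed
  have s2: "(\<Sum>n<N. t * c n + h n) = t * (\<Sum>n<N. c n) + (\<Sum>n<N. h n)"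
    by (simp add: sum.distrib sum_distrib_left)
  have s3: "(\<Sum>n<N. h n) = (\<Sum>n\<in>{n\<in>{..<N}. n < dR}. p n - t)"
    unfolding h_def by (rule sum.inter_filter[symmetric]) simp
  have s4: "{n\<in>{..<N}. n < dR} = {..<dR}" using dR by auto
  have s5: "(\<Sum>n<dR. p n - t) = (\<Sum>n<dR. p n) - t * real dR"
    by (simp add: sum_subtractf)
  have s6: "t * (\<Sum>n<N. c n) \<le> t * real dR" using t0 csum by (rule mult_left_mono[rotated])
  show ?thesis using s1 s2 s3 s4 s5 s6 by simp
qed

theorem lemma1:
  fixes dO dR :: nat and \<beta> :: real and lam oc :: "nat \<Rightarrow> real"
    and \<xi> \<phi> :: "nat \<Rightarrow> complex vec" and \<sigma> :: "nat \<Rightarrow> nat \<times> nat"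
  assumes dO: "dO \<ge> 1" and dR: "dR \<ge> 1"
    and beta: "\<beta> > 0"
    and lam_mono: "\<forall>i j. i \<le> j \<longrightarrow> j < dR \<longrightarrow> lam i \<le> lam j"
    and xi_onb: "onb dR \<xi>"
    and phi_onb: "onb dO \<phi>"
    and o_nonneg: "\<forall>l<dO. oc l \<ge> 0"
    and o_sum: "(\<Sum>l<dO. oc l) = 1"
    and o_mono: "\<forall>i j. i \<le> j \<longrightarrow> j < dO \<longrightarrow> oc j \<le> oc i"
    and sigma_bij: "bij_betw \<sigma> {..<dO * dR} ({..<dO} \<times> {..<dR})"
    and p_mono: "\<forall>i j. i \<le> j \<longrightarrow> j < dO * dR \<longrightarrow>
        oc (fst (\<sigma> j)) * gibbs_weights dR \<beta> lam (snd (\<sigma> j))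
          \<le> oc (fst (\<sigma> i)) * gibbs_weights dR \<beta> lam (snd (\<sigma> i))"
  shows
   "let r = gibbs_weights dR \<beta> lam;
        \<rho> = tensor_mat (spec_mat dO oc \<phi>) (gibbs_state dR \<beta> lam \<xi>);
        p = (\<lambda>n. oc (fst (\<sigma> n)) * r (snd (\<sigma> n)));
        \<psi> = (\<lambda>n. tensor_vec (\<phi> (fst (\<sigma> n))) (\<xi> (snd (\<sigma> n))));
        val = (\<lambda>U. prob_in (\<phi> 0) (partial_trace_R dO dR (U * \<rho> * mat_adjoint U)));
        pmax = (\<Sum>m<dR. p m)
    in (\<forall>U. unitary_mat (dO * dR) U \<longrightarrow> val U \<le> pmax)
     \<and> (\<exists>U. unitary_mat (dO * dR) U \<and> val U = pmax)
     \<and> (\<forall>U. unitary_mat (dO * dR) U \<longrightarrow>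
           (\<exists>\<xi>'. onb dR \<xi>' \<and> (\<forall>m<dR. U *\<^sub>v \<psi> m = tensor_vec (\<phi> 0) (\<xi>' m)))
           \<longrightarrow> val U = pmax)"
proof -
  define N where "N = dO * dR"
  define r where "r = gibbs_weights dR \<beta> lam"
  define \<rho> where "\<rho> = tensor_mat (spec_mat dO oc \<phi>) (gibbs_state dR \<beta> lam \<xi>)"
  define p where "p = (\<lambda>n. oc (fst (\<sigma> n)) * r (snd (\<sigma> n)))"
  define \<psi> where "\<psi> = (\<lambda>n. tensor_vec (\<phi> (fst (\<sigma> n))) (\<xi> (snd (\<sigma> n))))"
  define val where "val = (\<lambda>U. prob_in (\<phi> 0) (partial_trace_R dO dR (U * \<rho> * mat_adjoint U)))"
  define pmax where "pmax = (\<Sum>m<dR. p m)"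
  define w where "w = (\<lambda>m. tensor_vec (\<phi> 0) (unit_vec dR m))"
  define C where "C = (\<lambda>U n. \<Sum>m<dR. (cmod ((U *\<^sub>v \<psi> n) \<bullet>c w m))\<^sup>2)"
  have NdR: "dR \<le> N" unfolding N_def using dO by simp
  have phi0: "\<phi> 0 \<in> carrier_vec dO" using phi_onb dO onb_carrier by auto
  have phi00: "\<phi> 0 \<bullet>c \<phi> 0 = 1" using phi_onb dO unfolding onb_def by auto
  have psi_onb: "onb N \<psi>" unfolding N_def \<psi>_def by (rule onb_tensor_sigma[OF phi_onb xi_onb sigma_bij])
  have psic: "\<And>n. n < N \<Longrightarrow> \<psi> n \<in> carrier_vec N" using psi_onb onb_carrier by auto
  have wc: "\<And>m. m < dR \<Longrightarrow> w m \<in> carrier_vec N" unfolding w_def N_def using phi0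
    by (intro tensor_carrier) auto
  have w_orth: "\<And>m m'. m < dR \<Longrightarrow> m' < dR \<Longrightarrow> w m \<bullet>c w m' = (if m = m' then 1 else 0)"
    unfolding w_def using phi0 phi00 onb_unit[of dR] unfolding onb_def
    by (subst tensor_cinner[where na=dO and nb=dR]) auto
  have rpos: "r m > 0" for m
  proof -
    have "0 \<in> {..<dR}" using dR by simp
    then have ne: "{..<dR} \<noteq> {}" by blast
    have "(\<Sum>k<dR. exp (- \<beta> * lam k)) > 0" by (rule sum_pos) (use ne in auto)
    then show ?thesis unfolding r_def gibbs_weights_def by simp
  qed
  have pnn: "\<And>n. n < N \<Longrightarrow> p n \<ge> 0"
  proof -
    fix n assume "n < N"
    then have "\<sigma> n \<in> {..<dO} \<times> {..<dR}" using sigma_bij bij_betwE unfolding N_def by blast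
    then have "fst (\<sigma> n) < dO" by auto
    then show "p n \<ge> 0" unfolding p_def using o_nonneg rpos[of "snd (\<sigma> n)"] by simp
  qed
  have rho_form: "\<rho> = mat N N (\<lambda>(c,d). \<Sum>n<N. complex_of_real (p n) * \<psi> n $ c * cnj (\<psi> n $ d))"
    unfolding \<rho>_def gibbs_state_def p_def \<psi>_def N_def r_def
    by (rule tensor_spec_form[OF phi_onb xi_onb sigma_bij])
  have val_form: "val U = (\<Sum>n<N. p n * C U n)" if UC: "U \<in> carrier_mat N N" for U
  proof -
    have "U * \<rho> * mat_adjoint U = mat N N (\<lambda>(a,b). \<Sum>n<N. complex_of_real (p n) * (U *\<^sub>v \<psi> n) $ a * cnj ((U *\<^sub>v \<psi> n) $ b))"
      unfolding rho_form by (rule conj_form[OF UC psic])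
    then show ?thesis unfolding val_def C_def w_def N_def
      by (simp only:) (rule ptrace_form[OF phi0], use UC psic N_def in auto)
  qed
  have C_nn: "C U n \<ge> 0" for U n unfolding C_def by (intro sum_nonneg) auto
  have C_le1: "C U n \<le> 1" if U: "unitary_mat N U" and n: "n < N" for U n
  proof -
    have UC: "U \<in> carrier_mat N N" using U unfolding unitary_mat_def by auto
    have uc: "U *\<^sub>v \<psi> n \<in> carrier_vec N" using UC psic n by auto
    have "C U n \<le> (\<Sum>i<N. (cmod ((U *\<^sub>v \<psi> n) $ i))\<^sup>2)"
      unfolding C_def by (rule bessel_vec[OF uc wc w_orth])
    also have "\<dots> = 1"
    proof -
      have "complex_of_real (\<Sum>i<N. (cmod ((U *\<^sub>v \<psi> n) $ i))\<^sup>2) = (U *\<^sub>v \<psi> n) \<bullet>c (U *\<^sub>v \<psi> n)"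
        by (rule norm_sq_cinner[OF uc])
      also have "\<dots> = \<psi> n \<bullet>c \<psi> n" by (rule unitary_inner[OF U psic[OF n] psic[OF n]])
      also have "\<dots> = 1" using psi_onb n unfolding onb_def by auto
      finally show ?thesis by (metis of_real_1 of_real_eq_iff)
    qed
    finally show ?thesis .
  qed
  have C_sum: "(\<Sum>n<N. C U n) \<le> real dR" if U: "unitary_mat N U" for U
  proof -
    have UC: "U \<in> carrier_mat N N" using U unfolding unitary_mat_def by auto
    have uc: "\<And>n. n < N \<Longrightarrow> U *\<^sub>v \<psi> n \<in> carrier_vec N" using UC psic by auto
    have uorth: "\<And>k k'. k < N \<Longrightarrow> k' < N \<Longrightarrow> (U *\<^sub>v \<psi> k) \<bullet>c (U *\<^sub>v \<psi> k') = (if k = k' then 1 else 0)"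
      using unitary_inner[OF U psic psic] psi_onb unfolding onb_def by auto
    have "(\<Sum>n<N. C U n) = (\<Sum>m<dR. \<Sum>n<N. (cmod (w m \<bullet>c (U *\<^sub>v \<psi> n)))\<^sup>2)"
      unfolding C_def by (subst sum.swap) (intro sum.cong refl, simp add: cinner_conj[OF uc wc])
    also have "\<dots> \<le> (\<Sum>m<dR. (1::real))"
    proof (rule sum_mono)
      fix m assume m: "m \<in> {..<dR}"
      have "(\<Sum>n<N. (cmod (w m \<bullet>c (U *\<^sub>v \<psi> n)))\<^sup>2) \<le> (\<Sum>i<N. (cmod (w m $ i))\<^sup>2)"
        by (rule bessel_vec[OF wc uc uorth]) (use m in auto)
      also have "\<dots> = 1"
      proof -
        have "complex_of_real (\<Sum>i<N. (cmod (w m $ i))\<^sup>2) = w m \<bullet>c w m"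
          by (rule norm_sq_cinner) (use wc m in auto)
        also have "\<dots> = 1" using w_orth m by auto
        finally show ?thesis by (metis of_real_1 of_real_eq_iff)
      qed
      finally show "(\<Sum>n<N. (cmod (w m \<bullet>c (U *\<^sub>v \<psi> n)))\<^sup>2) \<le> 1" .
    qed
    finally show ?thesis by simp
  qed
  have p_mono': "\<forall>i j. i \<le> j \<longrightarrow> j < N \<longrightarrow> p j \<le> p i"
    using p_mono unfolding p_def r_def N_def by blast
  have claim1: "\<forall>U. unitary_mat N U \<longrightarrow> val U \<le> pmax"
  proof (intro allI impI)
    fix U assume U: "unitary_mat N U"
    have UC: "U \<in> carrier_mat N N" using U unfolding unitary_mat_def by auto
    show "val U \<le> pmax" unfolding val_form[OF UC] pmax_def
      by (rule rearr[OF _ NdR p_mono' pnn]) (use dR C_nn C_le1[OF U] C_sum[OF U] in auto)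
  qed
  have claim3: "\<forall>U. unitary_mat N U \<longrightarrow>
           (\<exists>\<xi>'. onb dR \<xi>' \<and> (\<forall>m<dR. U *\<^sub>v \<psi> m = tensor_vec (\<phi> 0) (\<xi>' m)))
           \<longrightarrow> val U = pmax"
  proof (intro allI impI)
    fix U assume U: "unitary_mat N U"
      and ex: "\<exists>\<xi>'. onb dR \<xi>' \<and> (\<forall>m<dR. U *\<^sub>v \<psi> m = tensor_vec (\<phi> 0) (\<xi>' m))"
    obtain \<xi>' where xo: "onb dR \<xi>'" and xU: "\<forall>m<dR. U *\<^sub>v \<psi> m = tensor_vec (\<phi> 0) (\<xi>' m)"
      using ex by blast
    have UC: "U \<in> carrier_mat N N" using U unfolding unitary_mat_def by auto
    have C1: "C U n = 1" if n: "n < dR" for n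
    proof -
      have xc: "\<xi>' n \<in> carrier_vec dR" using xo n onb_carrier by auto
      have "C U n = (\<Sum>m<dR. (cmod (\<xi>' n $ m))\<^sup>2)"
        unfolding C_def
      proof (intro sum.cong refl)
        fix m assume m: "m \<in> {..<dR}"
        have "(U *\<^sub>v \<psi> n) \<bullet>c w m = (\<phi> 0 \<bullet>c \<phi> 0) * (\<xi>' n \<bullet>c unit_vec dR m)"
          unfolding xU[rule_format, OF n] w_def by (rule tensor_cinner[OF phi0 phi0 xc]) auto
        also have "\<xi>' n \<bullet>c unit_vec dR m = \<xi>' n $ m"
          using xc m by (simp add: scalar_prod_def unit_vec_def if_distrib sum.delta cong: if_cong)
        finally show "(cmod ((U *\<^sub>v \<psi> n) \<bullet>c w m))\<^sup>2 = (cmod (\<xi>' n $ m))\<^sup>2" using phi00 by simp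
      qed
      also have "\<dots> = 1"
      proof -
        have "complex_of_real (\<Sum>m<dR. (cmod (\<xi>' n $ m))\<^sup>2) = \<xi>' n \<bullet>c \<xi>' n"
          by (rule norm_sq_cinner[OF xc])
        also have "\<dots> = 1" using xo n unfolding onb_def by auto
        finally show ?thesis by (metis of_real_1 of_real_eq_iff)
      qed
      finally show ?thesis .
    qed
    have split: "\<And>f :: nat \<Rightarrow> real. (\<Sum>n<N. f n) = (\<Sum>n<dR. f n) + (\<Sum>n\<in>{dR..<N}. f n)"
      using NdR by (simp add: lessThan_atLeast0 sum.atLeastLessThan_concat)
    have "(\<Sum>n\<in>{dR..<N}. C U n) \<le> 0"
      using C_sum[OF U] split[of "C U"] C1 by simp
    then have C0: "\<forall>n\<in>{dR..<N}. C U n = 0"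
      using sum_nonneg_eq_0_iff[of "{dR..<N}" "C U"] C_nn by (meson antisym finite_atLeastLessThan sum_nonneg)
    have "val U = (\<Sum>n<dR. p n * C U n) + (\<Sum>n\<in>{dR..<N}. p n * C U n)"
      unfolding val_form[OF UC] by (rule split)
    also have "\<dots> = pmax" unfolding pmax_def using C1 C0 by simp
    finally show "val U = pmax" .
  qed
  have claim2: "\<exists>U. unitary_mat N U \<and> val U = pmax"
  proof -
    define \<chi> where "\<chi> = (\<lambda>n. tensor_vec (\<phi> (n div dR)) (unit_vec dR (n mod dR)))"
    have chi_onb: "onb N \<chi>" unfolding \<chi>_def N_def by (rule onb_tensor[OF phi_onb onb_unit])
    define U where "U = mat N N (\<lambda>(a,b). \<Sum>n<N. \<chi> n $ a * cnj (\<psi> n $ b))"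
    have U: "unitary_mat N U" unfolding U_def by (rule unitary_construct(1)[OF psi_onb chi_onb])
    have "\<forall>m<dR. U *\<^sub>v \<psi> m = tensor_vec (\<phi> 0) (unit_vec dR m)"
    proof (intro allI impI)
      fix m assume m: "m < dR"
      then have "m < N" using NdR by simp
      then have "U *\<^sub>v \<psi> m = \<chi> m" unfolding U_def by (rule unitary_construct(2)[OF psi_onb chi_onb])
      then show "U *\<^sub>v \<psi> m = tensor_vec (\<phi> 0) (unit_vec dR m)" unfolding \<chi>_def using m by simp
    qed
    then have "val U = pmax" using claim3 U onb_unit[of dR] by blast
    then show ?thesis using U by blast
  qed
  show ?thesis
    using claim1 claim2 claim3
    unfolding Let_def N_def r_def \<rho>_def p_def \<psi>_def val_def pmax_def by simp
qed

end
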